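(* Let $\mathbb{R}^n$ carry the Euclidean norm $\|\cdot\|$ (which is its own dual), let $Q\subseteq\mathbb{R}^n$ be closed convex, and let $f:Q\to\mathbb{R}$ admit a stochastic $(\delta,L)$-oracle with parameter $D>0$. Let $(f_\delta(y),\nabla f_\delta(y;\xi_i))$, $i=1,\dots,m$, be $m$ independent outputs of this oracle, let $x,y\in Q$ be random vectors with $y$ independent of $\xi_1,\dots,\xi_m$, let $\tilde L$ be a random constant with $\tilde L\ge\frac32L$, and let $\Omega\ge\sqrt2-1$. Set $\tilde\nabla^m f_\delta(y)=\frac1m\sum_{j=1}^m\nabla f_\delta(y;\xi_j)$. Then $$\mathbb{P}\Big(f_\delta(x)-f_\delta(y)-\langle\tilde\nabla^mf_\delta(y),x-y\rangle>(1+2\Omega+\Omega^2)\frac{3D}{\tilde Lm}+\frac{\tilde L}2\|x-y\|^2+\delta\Big)\le\exp(-\Omega^2/2).$$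
   Context: A stochastic $(\delta,L)$-oracle for $f$ returns for each query $y\in Q$ a pair $(f_\delta(y),\nabla f_\delta(y;\xi))$ (with $\xi$ random) such that there is a vector $\nabla f_\delta(y)$ with: $0\le f(x)-f_\delta(y)-\langle\nabla f_\delta(y),x-y\rangle\le\frac L2\|x-y\|^2+\delta$ for all $x\in Q$; $\mathbb{E}\nabla f_\delta(y;\xi)=\nabla f_\delta(y)$; and $\mathbb{E}\exp\big(\|\nabla f_\delta(y;\xi)-\nabla f_\delta(y)\|^2/D\big)\le\exp(1)$, for all $y\in Q$. *)

theory Defs
  imports "HOL-Probability.Probability"
begin

text \<open>The randomness xi of the model has law mu
  (a probability measure on the noise space); the model returns the pair
  (fd y, G y xi).  The vector gd y plays the role of the (unknown) vector
  nabla f_delta(y) in the definition.\<close>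
definition stoch_oracle ::
  "('n::finite) itself \<Rightarrow> (real^'n) set \<Rightarrow> (real^'n \<Rightarrow> real) \<Rightarrow> real \<Rightarrow> real \<Rightarrow> real \<Rightarrow>
   'x measure \<Rightarrow> (real^'n \<Rightarrow> real) \<Rightarrow> (real^'n \<Rightarrow> 'x \<Rightarrow> real^'n) \<Rightarrow> bool" where
  "stoch_oracle _ Q f \<delta> L D \<mu> fd G \<longleftrightarrow>
     (\<exists>gd :: real^'n \<Rightarrow> real^'n. \<forall>y\<in>Q.
        (\<forall>x\<in>Q. 0 \<le> f x - fd y - inner (gd y) (x - y)
               \<and> f x - fd y - inner (gd y) (x - y) \<le> L / 2 * (norm (x - y))\<^sup>2 + \<delta>)
      \<and> integrable \<mu> (G y)
      \<and> (\<integral>\<xi>. G y \<xi> \<partial>\<mu>) = gd y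
      \<and> (\<integral>\<^sup>+\<xi>. ennreal (exp ((norm (G y \<xi> - gd y))\<^sup>2 / D)) \<partial>\<mu>) \<le> ennreal (exp 1))"

end

theory Submission
  imports Defs
begin

lemma exp_third_le: "exp (1/3::real) \<le> 3/2"
proof -
  have "1 + (-1/3::real) \<le> exp (-1/3)" by (rule exp_ge_add_one_self)
  hence "2/3 \<le> exp (-1/3::real)" by simp
  moreover have "exp (1/3::real) * exp (-1/3) = 1" by (simp add: exp_add[symmetric])
  moreover have "2/3 * exp (1/3::real) \<le> exp (-1/3) * exp (1/3)"
    using \<open>2/3 \<le> exp (-1/3::real)\<close> by (intro mult_right_mono) auto
  ultimately show ?thesis by (simp add: mult.commute)
qed

lemma gpp_nonneg: "exp (x::real) \<le> 3/2 * exp (3/4 * x\<^sup>2) * (1 + 3/2 * x\<^sup>2)"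
proof -
  have "x - 3/4*x\<^sup>2 \<le> 1/3"
    using sum_squares_ge_zero[of "x - 2/3" 0] by (simp add: power2_eq_square algebra_simps)
  hence "exp (x - 3/4*x\<^sup>2) \<le> 3/2" using exp_third_le by (meson exp_le_cancel_iff order_trans)
  hence "exp x \<le> 3/2 * exp (3/4*x\<^sup>2)"
    by (smt (verit) exp_diff exp_gt_zero divide_le_eq mult.commute)
  moreover have "3/2 * exp (3/4*x\<^sup>2) \<le> 3/2 * exp (3/4 * x\<^sup>2) * (1 + 3/2 * x\<^sup>2)"
    by (simp add: zero_le_power2)
  ultimately show ?thesis by linarith
qed

lemma exp_le_x_exp_sq: "exp (x::real) \<le> x + exp (3/4 * x\<^sup>2)"
proof -
  define g1 where "g1 = (\<lambda>x::real. 1 + 3/2 * x * exp (3/4 * x\<^sup>2) - exp x)"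
  define g where "g = (\<lambda>x::real. x + exp (3/4 * x\<^sup>2) - exp x)"
  have d1: "DERIV g1 t :> 3/2 * exp (3/4 * t\<^sup>2) * (1 + 3/2 * t\<^sup>2) - exp t" for t
    unfolding g1_def
    by (auto intro!: derivative_eq_intros simp: power2_eq_square algebra_simps)
  have d: "DERIV g t :> g1 t" for t
    unfolding g_def g1_def
    by (auto intro!: derivative_eq_intros simp: power2_eq_square algebra_simps)
  have mono1: "g1 a \<le> g1 b" if "a \<le> b" for a b
    by (rule DERIV_nonneg_imp_nondecreasing[OF that]) (use d1 gpp_nonneg in force)
  have g10: "g1 0 = 0" by (simp add: g1_def)
  show ?thesis
  proof (cases "x \<ge> 0")
    case True
    have "g 0 \<le> g x"
      by (rule DERIV_nonneg_imp_nondecreasing[OF True])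
         (use d mono1 g10 in force)
    thus ?thesis by (simp add: g_def)
  next
    case False
    have "g x \<ge> g 0"
      by (rule DERIV_nonpos_imp_nonincreasing[of x 0]) (use False d mono1 g10 in force)+
    thus ?thesis by (simp add: g_def)
  qed
qed

lemma x_exp_sq_nonneg: "0 \<le> (x::real) + exp (3/4 * x\<^sup>2)"
  using exp_le_x_exp_sq[of x] exp_gt_zero[of x] by linarith

lemma exp_convex_pt: "0 \<le> p \<Longrightarrow> p \<le> (1::real) \<Longrightarrow> exp (p * y) \<le> (1 - p) + p * exp y"
  using convex_onD[OF exp_convex, of p 0 y] by simp

lemma (in prob_space) nn_exp_pow:
  assumes V[measurable]: "V \<in> borel_measurable M" and p: "0 \<le> p" "p \<le> 1"
    and B: "(\<integral>\<^sup>+x. ennreal (exp (V x)) \<partial>M) \<le> ennreal (exp K)"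
  shows "(\<integral>\<^sup>+x. ennreal (exp (p * V x)) \<partial>M) \<le> ennreal (exp (p * K))"
proof -
  define A where "A = exp (p*K) * (1 - p)"
  define C where "C = p * exp (p*K - K)"
  have A0: "A \<ge> 0" and C0: "C \<ge> 0" using p by (auto simp: A_def C_def)
  have pt: "exp (p * V x) \<le> A + C * exp (V x)" for x
  proof -
    have "exp (p * V x) = exp (p*K) * exp (p * (V x - K))" by (simp add: exp_add[symmetric] algebra_simps)
    also have "\<dots> \<le> exp (p*K) * ((1-p) + p * exp (V x - K))"
      using exp_convex_pt[OF p] by simp
    also have "\<dots> = A + C * exp (V x)"
      by (simp add: A_def C_def algebra_simps exp_diff exp_add)
    finally show ?thesis .
  qed
  have "(\<integral>\<^sup>+x. ennreal (exp (p * V x)) \<partial>M) \<le> (\<integral>\<^sup>+x. ennreal A + ennreal C * ennreal (exp (V x)) \<partial>M)"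
    using pt A0 C0 by (intro nn_integral_mono) (simp add: ennreal_plus[symmetric] ennreal_mult[symmetric] del: ennreal_plus)
  also have "\<dots> = ennreal A + ennreal C * (\<integral>\<^sup>+x. ennreal (exp (V x)) \<partial>M)"
    by (subst nn_integral_add) (auto simp: nn_integral_cmult emeasure_space_1)
  also have "\<dots> \<le> ennreal A + ennreal C * ennreal (exp K)"
    using B by (intro add_left_mono mult_left_mono) auto
  also have "\<dots> = ennreal (A + C * exp K)"
    using A0 C0 by (simp add: ennreal_mult)
  also have "A + C * exp K = exp (p * K)"
    by (simp add: A_def C_def exp_diff algebra_simps)
  finally show ?thesis .
qed

lemma (in prob_space) subgauss:
  assumes w[measurable]: "w \<in> borel_measurable M" and int: "integrable M w" and e0: "expectation w = 0"
    and s: "\<sigma> > 0"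
    and B: "(\<integral>\<^sup>+x. ennreal (exp ((w x)\<^sup>2 / \<sigma>\<^sup>2)) \<partial>M) \<le> ennreal (exp 1)"
  shows "(\<integral>\<^sup>+x. ennreal (exp (t * w x)) \<partial>M) \<le> ennreal (exp (9/10 * t\<^sup>2 * \<sigma>\<^sup>2))"
proof (cases "3/4 * t\<^sup>2 * \<sigma>\<^sup>2 \<le> 1")
  case True
  define p where "p = 3/4 * t\<^sup>2 * \<sigma>\<^sup>2"
  have p: "0 \<le> p" "p \<le> 1" using True by (auto simp: p_def)
  have J: "(\<integral>\<^sup>+x. ennreal (exp (p * ((w x)\<^sup>2 / \<sigma>\<^sup>2))) \<partial>M) \<le> ennreal (exp (p * 1))"
    by (rule nn_exp_pow[OF _ p]) (use B in auto)
  have eqp: "p * ((w x)\<^sup>2 / \<sigma>\<^sup>2) = 3/4 * (t * w x)\<^sup>2" for x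
    using s by (simp add: p_def power_mult_distrib field_simps)
  have J2: "(\<integral>\<^sup>+x. ennreal (exp (3/4 * (t * w x)\<^sup>2)) \<partial>M) \<le> ennreal (exp p)"
    using J by (simp only: eqp mult_1_right)
  have fin: "(\<integral>\<^sup>+x. ennreal (exp (3/4 * (t * w x)\<^sup>2)) \<partial>M) < \<infinity>"
    using J2 by (simp add: order_le_less_trans)
  have ie: "integrable M (\<lambda>x. exp (3/4 * (t * w x)\<^sup>2))"
    by (rule integrableI_bounded) (use fin in auto)
  have "(\<integral>\<^sup>+x. ennreal (exp (t * w x)) \<partial>M) \<le> (\<integral>\<^sup>+x. ennreal (t * w x + exp (3/4 * (t * w x)\<^sup>2)) \<partial>M)"
    by (intro nn_integral_mono ennreal_leI exp_le_x_exp_sq)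
  also have "\<dots> = ennreal (\<integral>x. t * w x + exp (3/4 * (t * w x)\<^sup>2) \<partial>M)"
    by (rule nn_integral_eq_integral)
       (use int ie x_exp_sq_nonneg in auto)
  also have "(\<integral>x. t * w x + exp (3/4 * (t * w x)\<^sup>2) \<partial>M) = (\<integral>x. exp (3/4 * (t * w x)\<^sup>2) \<partial>M)"
    using int ie e0 by (simp add: Bochner_Integration.integral_add)
  also have "ennreal \<dots> = (\<integral>\<^sup>+x. ennreal (exp (3/4 * (t * w x)\<^sup>2)) \<partial>M)"
    by (rule nn_integral_eq_integral[symmetric]) (use ie in auto)
  also have "\<dots> \<le> ennreal (exp p)" by (rule J2)
  also have "\<dots> \<le> ennreal (exp (9/10 * t\<^sup>2 * \<sigma>\<^sup>2))"
    by (intro ennreal_leI) (auto simp: p_def)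
  finally show ?thesis .
next
  case False
  have J: "(\<integral>\<^sup>+x. ennreal (exp (3/5 * ((w x)\<^sup>2 / \<sigma>\<^sup>2))) \<partial>M) \<le> ennreal (exp (3/5 * 1))"
    by (rule nn_exp_pow) (use B in auto)
  have pt: "t * w x \<le> 5/12 * t\<^sup>2 * \<sigma>\<^sup>2 + 3/5 * ((w x)\<^sup>2 / \<sigma>\<^sup>2)" for x
  proof -
    have "0 \<le> 3/5 * (w x / \<sigma> - 5/6 * t * \<sigma>)\<^sup>2" by simp
    also have "\<dots> = 3/5 * ((w x)\<^sup>2 / \<sigma>\<^sup>2) - t * w x + 5/12 * t\<^sup>2 * \<sigma>\<^sup>2"
      using s by (simp add: power2_eq_square field_simps)
    finally show ?thesis by linarith
  qed
  have "(\<integral>\<^sup>+x. ennreal (exp (t * w x)) \<partial>M) \<le> (\<integral>\<^sup>+x. ennreal (exp (5/12 * t\<^sup>2 * \<sigma>\<^sup>2)) * ennreal (exp (3/5 * ((w x)\<^sup>2 / \<sigma>\<^sup>2))) \<partial>M)"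
    using pt by (intro nn_integral_mono) (simp add: ennreal_mult[symmetric] exp_add[symmetric])
  also have "\<dots> = ennreal (exp (5/12 * t\<^sup>2 * \<sigma>\<^sup>2)) * (\<integral>\<^sup>+x. ennreal (exp (3/5 * ((w x)\<^sup>2 / \<sigma>\<^sup>2))) \<partial>M)"
    by (rule nn_integral_cmult) auto
  also have "\<dots> \<le> ennreal (exp (5/12 * t\<^sup>2 * \<sigma>\<^sup>2)) * ennreal (exp (3/5 * 1))"
    using J by (intro mult_left_mono) auto
  also have "\<dots> = ennreal (exp (5/12 * t\<^sup>2 * \<sigma>\<^sup>2 + 3/5))"
    by (simp add: ennreal_mult[symmetric] exp_add)
  also have "\<dots> \<le> ennreal (exp (9/10 * t\<^sup>2 * \<sigma>\<^sup>2))"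
  proof -
    have "5/12 * t\<^sup>2 * \<sigma>\<^sup>2 + 3/5 \<le> 9/10 * t\<^sup>2 * \<sigma>\<^sup>2" using False by linarith
    thus ?thesis by (intro ennreal_leI) simp
  qed
  finally show ?thesis .
qed

lemma exp_sub_one_le: "0 \<le> b \<Longrightarrow> exp (b::real) \<le> 1 + b * exp b"
proof -
  assume b: "0 \<le> b"
  have "1 + (-b) \<le> exp (-b)" by (rule exp_ge_add_one_self)
  hence "(1 - b) * exp b \<le> exp (-b) * exp b" by (intro mult_right_mono) auto
  thus ?thesis by (simp add: exp_minus algebra_simps)
qed

lemma y_le_exp: "0 < q \<Longrightarrow> 0 < D \<Longrightarrow> (y::real) \<le> D / (exp 1 * q) * exp (q * y / D)"
proof -
  assume q: "0 < q" and D: "0 < D"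
  have "q*y/D \<le> exp (q*y/D - 1)" using exp_ge_add_one_self[of "q*y/D - 1"] by simp
  hence "q*y/D \<le> exp (q*y/D) / exp 1" by (simp add: exp_diff)
  hence "q*y/D * (D / q) \<le> exp (q*y/D) / exp 1 * (D / q)" using q D by (intro mult_right_mono) auto
  thus ?thesis using q D by (simp add: field_simps)
qed

lemma step_mgf:
  fixes h :: "'x \<Rightarrow> real^'n" and \<mu> :: "'x measure"
  assumes P: "prob_space \<mu>" and h[measurable]: "h \<in> borel_measurable \<mu>" and hi: "integrable \<mu> h"
    and h0: "(\<integral>\<xi>. h \<xi> \<partial>\<mu>) = 0"
    and E: "(\<integral>\<^sup>+\<xi>. ennreal (exp ((norm (h \<xi>))\<^sup>2 / D)) \<partial>\<mu>) \<le> ennreal (exp 1)"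
    and D: "D > 0" and lam: "lam > 0" "lam * D \<le> lb" and lb: "lb < 13/18"
  shows "(\<integral>\<^sup>+\<xi>. ennreal (exp (lam * (norm (s + h \<xi>))\<^sup>2)) \<partial>\<mu>)
     \<le> ennreal (exp (lam * (norm s)\<^sup>2 + 18/5 * lam\<^sup>2 * (norm s)\<^sup>2 * D + lam * D / (13/18 - lb)))"
proof -
  interpret prob_space \<mu> by (rule P)
  define z where "z = lam\<^sup>2 * (norm s)\<^sup>2 * D"
  define al where "al = 1 / (13/18 - lb)"
  define q where "q = 1 - 5/18 - lam * D"
  have q: "q > 0" "13/18 - lb \<le> q" using lam lb by (auto simp: q_def)
  have al: "al > 0" "1 / q \<le> al" using q lb by (auto simp: al_def intro!: divide_left_mono)
  define A where "A = exp (lam * (norm s)\<^sup>2)"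
  define B where "B = exp (lam * (norm s)\<^sup>2) * exp (18/5 * z) * lam * D * al / exp 1"
  have A0: "A \<ge> 0" and B0: "B \<ge> 0" using lam D al by (auto simp: A_def B_def)
  have pt: "exp (lam * (norm (s + h \<xi>))\<^sup>2) \<le> A * exp (2 * lam * inner s (h \<xi>)) + B * exp ((norm (h \<xi>))\<^sup>2 / D)" for \<xi>
  proof -
    define u where "u = norm (h \<xi>)"
    define x where "x = 2 * lam * inner s (h \<xi>)"
    define b where "b = lam * u\<^sup>2"
    have b0: "b \<ge> 0" using lam by (simp add: b_def)
    have nsq: "(norm (s + h \<xi>))\<^sup>2 = (norm s)\<^sup>2 + 2 * inner s (h \<xi>) + u\<^sup>2"
      by (simp add: u_def power2_norm_eq_inner inner_add inner_commute)
    have e1: "exp (lam * (norm (s + h \<xi>))\<^sup>2) = A * (exp x * exp b)"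
      by (simp add: nsq A_def x_def b_def exp_add[symmetric] algebra_simps)
    have "exp x * exp b \<le> exp x * (1 + b * exp b)"
      using exp_sub_one_le[OF b0] by (intro mult_left_mono) auto
    also have "\<dots> = exp x + exp x * b * exp b" by (simp add: algebra_simps)
    finally have s1: "exp x * exp b \<le> exp x + exp x * b * exp b" .
    have xle: "x \<le> 18/5 * z + 5/18 * u\<^sup>2 / D"
    proof -
      have "inner s (h \<xi>) \<le> norm s * u" unfolding u_def by (rule norm_cauchy_schwarz)
      hence "x \<le> 2 * lam * norm s * u" using lam by (simp add: x_def)
      also have "\<dots> \<le> 18/5 * z + 5/18 * u\<^sup>2 / D"
      proof -
        have "0 \<le> 5/18 / D * (u - 18/5 * lam * norm s * D)\<^sup>2" using D by simp
        also have "\<dots> = 5/18 * u\<^sup>2 / D - 2 * lam * norm s * u + 18/5 * z"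
          using D by (simp add: z_def power2_eq_square field_simps)
        finally show ?thesis by linarith
      qed
      finally show ?thesis .
    qed
    have "exp x * b * exp b \<le> exp (18/5 * z + 5/18 * u\<^sup>2 / D) * b * exp b"
      using xle b0 by (intro mult_right_mono) auto
    also have "\<dots> = exp (18/5 * z) * lam * (u\<^sup>2 * exp (- q * u\<^sup>2 / D)) * exp (u\<^sup>2 / D)"
      using D by (simp add: b_def q_def exp_add[symmetric] field_simps)
    also have "\<dots> \<le> exp (18/5 * z) * lam * (D / (exp 1 * q)) * exp (u\<^sup>2 / D)"
    proof -
      have "u\<^sup>2 \<le> D / (exp 1 * q) * exp (q * u\<^sup>2 / D)" by (rule y_le_exp[OF q(1) D])
      hence "u\<^sup>2 * exp (- q * u\<^sup>2 / D) \<le> D / (exp 1 * q) * exp (q * u\<^sup>2 / D) * exp (- q * u\<^sup>2 / D)"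
        by (intro mult_right_mono) auto
      also have "\<dots> = D / (exp 1 * q)" by (simp add: exp_add[symmetric])
      finally show ?thesis using lam by (intro mult_right_mono mult_left_mono) auto
    qed
    also have "\<dots> \<le> exp (18/5 * z) * lam * (D * al / exp 1) * exp (u\<^sup>2 / D)"
    proof -
      have "D / (exp 1 * q) = D / exp 1 * (1/q)" by simp
      also have "\<dots> \<le> D / exp 1 * al" using al D by (intro mult_left_mono) auto
      finally show ?thesis using lam by (intro mult_right_mono mult_left_mono) (auto simp: field_simps)
    qed
    finally have s2: "exp x * b * exp b \<le> exp (18/5 * z) * lam * (D * al / exp 1) * exp (u\<^sup>2 / D)" .
    have "exp (lam * (norm (s + h \<xi>))\<^sup>2) \<le> A * (exp x + exp (18/5 * z) * lam * (D * al / exp 1) * exp (u\<^sup>2 / D))"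
      unfolding e1 using s1 s2 A0 by (intro mult_left_mono) auto
    also have "\<dots> = A * exp x + B * exp (u\<^sup>2 / D)" by (simp add: A_def B_def algebra_simps)
    finally show ?thesis by (simp add: x_def u_def)
  qed
  have SG: "(\<integral>\<^sup>+\<xi>. ennreal (exp (2 * lam * inner s (h \<xi>))) \<partial>\<mu>) \<le> ennreal (exp (18/5 * z))"
  proof (cases "s = 0")
    case True thus ?thesis by (simp add: emeasure_space_1 z_def)
  next
    case False
    have sig: "sqrt ((norm s)\<^sup>2 * D) > 0" using False D by simp
    have "(\<integral>\<^sup>+\<xi>. ennreal (exp ((inner s (h \<xi>))\<^sup>2 / (sqrt ((norm s)\<^sup>2 * D))\<^sup>2)) \<partial>\<mu>)
          \<le> (\<integral>\<^sup>+\<xi>. ennreal (exp ((norm (h \<xi>))\<^sup>2 / D)) \<partial>\<mu>)"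
    proof (intro nn_integral_mono ennreal_leI)
      fix \<xi>
      have "(inner s (h \<xi>))\<^sup>2 \<le> (norm s)\<^sup>2 * (norm (h \<xi>))\<^sup>2"
        using Cauchy_Schwarz_ineq[of s "h \<xi>"] by (simp add: power2_norm_eq_inner)
      hence "(inner s (h \<xi>))\<^sup>2 / ((norm s)\<^sup>2 * D) \<le> (norm s)\<^sup>2 * (norm (h \<xi>))\<^sup>2 / ((norm s)\<^sup>2 * D)"
        using D False by (intro divide_right_mono) auto
      also have "\<dots> = (norm (h \<xi>))\<^sup>2 / D" using False by simp
      finally show "exp ((inner s (h \<xi>))\<^sup>2 / (sqrt ((norm s)\<^sup>2 * D))\<^sup>2) \<le> exp ((norm (h \<xi>))\<^sup>2 / D)"
        using D by simp
    qed
    also have "\<dots> \<le> ennreal (exp 1)" by (rule E)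
    finally have E2: "(\<integral>\<^sup>+\<xi>. ennreal (exp ((inner s (h \<xi>))\<^sup>2 / (sqrt ((norm s)\<^sup>2 * D))\<^sup>2)) \<partial>\<mu>) \<le> ennreal (exp 1)" .
    have "(\<integral>\<^sup>+\<xi>. ennreal (exp ((2 * lam) * inner s (h \<xi>))) \<partial>\<mu>) \<le> ennreal (exp (9/10 * (2*lam)\<^sup>2 * (sqrt ((norm s)\<^sup>2 * D))\<^sup>2))"
      by (rule subgauss[OF _ _ _ sig E2]) (use hi h0 in auto)
    also have "9/10 * (2*lam)\<^sup>2 * (sqrt ((norm s)\<^sup>2 * D))\<^sup>2 = 18/5 * z"
      using D by (simp add: z_def power2_eq_square)
    finally show ?thesis by simp
  qed
  have "(\<integral>\<^sup>+\<xi>. ennreal (exp (lam * (norm (s + h \<xi>))\<^sup>2)) \<partial>\<mu>)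
      \<le> (\<integral>\<^sup>+\<xi>. ennreal A * ennreal (exp (2 * lam * inner s (h \<xi>))) + ennreal B * ennreal (exp ((norm (h \<xi>))\<^sup>2 / D)) \<partial>\<mu>)"
    using pt A0 B0 by (intro nn_integral_mono) (simp add: ennreal_mult[symmetric] ennreal_plus[symmetric] del: ennreal_plus)
  also have "\<dots> = ennreal A * (\<integral>\<^sup>+\<xi>. ennreal (exp (2 * lam * inner s (h \<xi>))) \<partial>\<mu>) + ennreal B * (\<integral>\<^sup>+\<xi>. ennreal (exp ((norm (h \<xi>))\<^sup>2 / D)) \<partial>\<mu>)"
    by (subst nn_integral_add) (auto simp: nn_integral_cmult)
  also have "\<dots> \<le> ennreal A * ennreal (exp (18/5 * z)) + ennreal B * ennreal (exp 1)"
    using SG E by (intro add_mono mult_left_mono) auto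
  also have "\<dots> = ennreal (A * exp (18/5 * z) + B * exp 1)"
    using A0 B0 by (simp add: ennreal_mult)
  also have "A * exp (18/5 * z) + B * exp 1 = exp (lam * (norm s)\<^sup>2) * exp (18/5 * z) * (1 + lam * D * al)"
    by (simp add: A_def B_def algebra_simps)
  also have "\<dots> \<le> exp (lam * (norm s)\<^sup>2) * exp (18/5 * z) * exp (lam * D * al)"
    using exp_ge_add_one_self[of "lam * D * al"] by (intro mult_left_mono) auto
  also have "\<dots> = exp (lam * (norm s)\<^sup>2 + 18/5 * lam\<^sup>2 * (norm s)\<^sup>2 * D + lam * D / (13/18 - lb))"
    by (simp add: z_def al_def exp_add[symmetric] algebra_simps)
  finally show ?thesis by (simp add: ennreal_leI)
qed

lemma pim_mgf:
  fixes h :: "'x \<Rightarrow> real^'n" and \<mu> :: "'x measure" and I :: "nat set"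
  assumes P: "prob_space \<mu>" and h[measurable]: "h \<in> borel_measurable \<mu>" and hi: "integrable \<mu> h"
    and h0: "(\<integral>\<xi>. h \<xi> \<partial>\<mu>) = 0"
    and E: "(\<integral>\<^sup>+\<xi>. ennreal (exp ((norm (h \<xi>))\<^sup>2 / D)) \<partial>\<mu>) \<le> ennreal (exp 1)"
    and D: "D > 0" and lb: "0 < lb" "lb < 13/18"
    and I: "finite I"
  shows "a \<ge> 18/5 * D * (real (card I) - 1) + D / lb \<Longrightarrow>
    (\<integral>\<^sup>+z. ennreal (exp ((norm (\<Sum>j\<in>I. h (z j)))\<^sup>2 / a)) \<partial>(PiM I (\<lambda>_. \<mu>)))
      \<le> ennreal (exp (D * real (card I) / ((13/18 - lb) * (a - 18/5 * D * (real (card I) - 1)))))"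
  using I
proof (induction I arbitrary: a rule: finite_induct)
  case empty
  interpret PP: prob_space "PiM {} (\<lambda>_. \<mu>)" by (rule prob_space_PiM) (use P in auto)
  show ?case by (simp add: PP.emeasure_space_1)
next
  case (insert i I a)
  interpret PS: product_sigma_finite "\<lambda>_::nat. \<mu>"
    unfolding product_sigma_finite_def using P by (simp add: prob_space_imp_sigma_finite)
  interpret Pm: prob_space \<mu> by (rule P)
  define k where "k = real (card I)"
  have ck: "real (card (insert i I)) = k + 1" using insert by (simp add: k_def)
  have k0: "k \<ge> 0" by (simp add: k_def)
  define c0 where "c0 = 13/18 - lb"
  have c0: "c0 > 0" using lb by (simp add: c0_def)
  have a: "a \<ge> 18/5 * D * k + D / lb" using insert(4) ck by simp
  have Dlb: "D / lb > 0" using D lb by simp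
  have Dk0: "18/5 * D * k \<ge> 0" using D k0 by simp
  have apos: "a > 0" using a Dlb Dk0 by linarith
  have akpos: "a - 18/5 * D * k > 0" using a Dlb by linarith
  have lamD: "1/a * D \<le> lb"
  proof -
    have "D / lb \<le> a" using a Dk0 by linarith
    thus ?thesis using lb apos by (simp add: field_simps)
  qed
  have inner: "(\<integral>\<^sup>+y. ennreal (exp ((norm (\<Sum>j\<in>insert i I. h ((z(i := y)) j)))\<^sup>2 / a)) \<partial>\<mu>)
      \<le> ennreal (exp (D / (c0 * a))) * ennreal (exp ((norm (\<Sum>j\<in>I. h (z j)))\<^sup>2 / (a - 18/5 * D)))" for z
  proof -
    define s where "s = (\<Sum>j\<in>I. h (z j))"
    have sumeq: "(\<Sum>j\<in>insert i I. h ((z(i := y)) j)) = s + h y" for y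
    proof -
      have "(\<Sum>j\<in>I. h ((z(i := y)) j)) = s" unfolding s_def
        using insert(2) by (intro sum.cong) auto
      thus ?thesis using insert(1,2) by (simp add: add.commute)
    qed
    have "(\<integral>\<^sup>+y. ennreal (exp ((norm (\<Sum>j\<in>insert i I. h ((z(i := y)) j)))\<^sup>2 / a)) \<partial>\<mu>)
        = (\<integral>\<^sup>+y. ennreal (exp (1/a * (norm (s + h y))\<^sup>2)) \<partial>\<mu>)"
      by (intro nn_integral_cong) (simp only: sumeq, simp)
    also have "\<dots> \<le> ennreal (exp (1/a * (norm s)\<^sup>2 + 18/5 * (1/a)\<^sup>2 * (norm s)\<^sup>2 * D + 1/a * D / (13/18 - lb)))"
      by (rule step_mgf[OF P h hi h0 E D _ lamD lb(2)]) (use apos in simp)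
    also have "\<dots> \<le> ennreal (exp (D / (c0 * a) + (norm s)\<^sup>2 / (a - 18/5 * D)))"
    proof (intro ennreal_leI exp_mono)
      have "1/a * (norm s)\<^sup>2 + 18/5 * (1/a)\<^sup>2 * (norm s)\<^sup>2 * D \<le> (norm s)\<^sup>2 / (a - 18/5 * D)"
      proof (cases "I = {}")
        case True thus ?thesis by (simp add: s_def)
      next
        case False
        hence "card I > 0" using insert(1) by (simp add: card_gt_0_iff)
        hence "k \<ge> 1" by (simp add: k_def)
        hence "18/5 * D * 1 \<le> 18/5 * D * k" using D by (intro mult_left_mono) auto
        hence aD: "a - 18/5 * D > 0" using akpos by linarith
        have "1/a + 18/5 * (1/a)\<^sup>2 * D \<le> 1 / (a - 18/5 * D)"
        proof -
          have "(a + 18/5*D) * (a - 18/5*D) \<le> a * a" by (simp add: algebra_simps)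
          hence "(a + 18/5*D) / (a * a) \<le> 1 / (a - 18/5*D)"
            using aD apos by (simp add: field_simps)
          moreover have "1/a + 18/5 * (1/a)\<^sup>2 * D = (a + 18/5*D) / (a * a)"
            using apos by (simp add: field_simps power2_eq_square)
          ultimately show ?thesis by simp
        qed
        hence "(1/a + 18/5 * (1/a)\<^sup>2 * D) * (norm s)\<^sup>2 \<le> 1 / (a - 18/5 * D) * (norm s)\<^sup>2"
          by (intro mult_right_mono) auto
        thus ?thesis by (simp add: algebra_simps)
      qed
      thus "1/a * (norm s)\<^sup>2 + 18/5 * (1/a)\<^sup>2 * (norm s)\<^sup>2 * D + 1/a * D / (13/18 - lb)
          \<le> D / (c0 * a) + (norm s)\<^sup>2 / (a - 18/5 * D)"
        by (simp add: c0_def mult.commute)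
    qed
    also have "\<dots> = ennreal (exp (D / (c0 * a))) * ennreal (exp ((norm s)\<^sup>2 / (a - 18/5 * D)))"
      by (simp add: exp_add ennreal_mult)
    finally show ?thesis by (simp add: s_def)
  qed
  have meas: "(\<lambda>z. ennreal (exp ((norm (\<Sum>j\<in>insert i I. h (z j)))\<^sup>2 / a))) \<in> borel_measurable (PiM (insert i I) (\<lambda>_. \<mu>))"
    by measurable
  have "(\<integral>\<^sup>+z. ennreal (exp ((norm (\<Sum>j\<in>insert i I. h (z j)))\<^sup>2 / a)) \<partial>(PiM (insert i I) (\<lambda>_. \<mu>)))
      = (\<integral>\<^sup>+z. (\<integral>\<^sup>+y. ennreal (exp ((norm (\<Sum>j\<in>insert i I. h ((z(i := y)) j)))\<^sup>2 / a)) \<partial>\<mu>) \<partial>(PiM I (\<lambda>_. \<mu>)))"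
    by (rule PS.product_nn_integral_insert[OF insert(1,2) meas])
  also have "\<dots> \<le> (\<integral>\<^sup>+z. ennreal (exp (D / (c0 * a))) * ennreal (exp ((norm (\<Sum>j\<in>I. h (z j)))\<^sup>2 / (a - 18/5 * D))) \<partial>(PiM I (\<lambda>_. \<mu>)))"
    by (intro nn_integral_mono inner)
  also have "\<dots> = ennreal (exp (D / (c0 * a))) * (\<integral>\<^sup>+z. ennreal (exp ((norm (\<Sum>j\<in>I. h (z j)))\<^sup>2 / (a - 18/5 * D))) \<partial>(PiM I (\<lambda>_. \<mu>)))"
    by (rule nn_integral_cmult) measurable
  also have "\<dots> \<le> ennreal (exp (D / (c0 * a))) * ennreal (exp (D * k / (c0 * (a - 18/5 * D - 18/5 * D * (k - 1)))))"
  proof (intro mult_left_mono)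
    have "18/5 * D * (k - 1) = 18/5 * D * k - 18/5 * D" by (simp add: right_diff_distrib)
    hence "a - 18/5 * D \<ge> 18/5 * D * (k - 1) + D / lb" using a by linarith
    from insert(3)[OF this[unfolded k_def]]
    show "(\<integral>\<^sup>+z. ennreal (exp ((norm (\<Sum>j\<in>I. h (z j)))\<^sup>2 / (a - 18/5 * D))) \<partial>(PiM I (\<lambda>_. \<mu>)))
        \<le> ennreal (exp (D * k / (c0 * (a - 18/5 * D - 18/5 * D * (k - 1)))))"
      by (simp add: k_def c0_def)
  qed simp
  also have "\<dots> = ennreal (exp (D / (c0 * a) + D * k / (c0 * (a - 18/5 * D * k))))"
  proof -
    have ee: "a - 18/5 * D - 18/5 * D * (k - 1) = a - 18/5 * D * k" by (simp add: right_diff_distrib)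
    show ?thesis unfolding exp_add ee by (rule ennreal_mult[symmetric]) auto
  qed
  also have "\<dots> \<le> ennreal (exp (D * (k + 1) / (c0 * (a - 18/5 * D * (k + 1 - 1)))))"
  proof (intro ennreal_leI exp_mono)
    have "1 / a \<le> 1 / (a - 18/5 * D * k)"
      using akpos Dk0 apos by (intro divide_left_mono) (auto intro!: mult_pos_pos)
    hence "D / c0 * (1/a) \<le> D / c0 * (1 / (a - 18/5 * D * k))"
      using D c0 by (intro mult_left_mono) auto
    hence "D / (c0 * a) \<le> D / (c0 * (a - 18/5 * D * k))" by simp
    moreover have "D * (k + 1) / (c0 * (a - 18/5 * D * k)) = D / (c0 * (a - 18/5 * D * k)) + D * k / (c0 * (a - 18/5 * D * k))"
      by (simp add: field_simps add_divide_distrib)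
    ultimately show "D / (c0 * a) + D * k / (c0 * (a - 18/5 * D * k)) \<le> D * (k + 1) / (c0 * (a - 18/5 * D * (k + 1 - 1)))"
      by simp
  qed
  finally show ?case by (simp add: ck c0_def)
qed

lemma pim_tail:
  fixes h :: "'x \<Rightarrow> real^'n" and \<mu> :: "'x measure"
  assumes P: "prob_space \<mu>" and h[measurable]: "h \<in> borel_measurable \<mu>" and hi: "integrable \<mu> h"
    and h0: "(\<integral>\<xi>. h \<xi> \<partial>\<mu>) = 0"
    and E: "(\<integral>\<^sup>+\<xi>. ennreal (exp ((norm (h \<xi>))\<^sup>2 / D)) \<partial>\<mu>) \<le> ennreal (exp 1)"
    and D: "D > 0" and lb: "0 < lb" "lb < 13/18"
    and m: "m \<ge> 1" and rho: "\<rho> > 0" and cons: "\<rho> * real m \<ge> 18/5 * (real m - 1) + 1 / lb"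
  shows "measure (PiM {1..m} (\<lambda>_. \<mu>)) {z \<in> space (PiM {1..m} (\<lambda>_. \<mu>)). (norm (\<Sum>j\<in>{1..m}. h (z j)))\<^sup>2 > T}
    \<le> exp (1 / ((13/18 - lb) * (\<rho> - 18/5 * (real m - 1) / real m)) - T / (D * real m * \<rho>))"
proof -
  interpret PP: prob_space "PiM {1..m} (\<lambda>_. \<mu>)" by (rule prob_space_PiM) (use P in auto)
  define a where "a = D * real m * \<rho>"
  define A where "A = {z \<in> space (PiM {1..m} (\<lambda>_. \<mu>)). (norm (\<Sum>j\<in>{1..m}. h (z j)))\<^sup>2 > T}"
  have mpos: "real m > 0" using m by simp
  have apos: "a > 0" using D mpos rho by (simp add: a_def)
  have acons: "a \<ge> 18/5 * D * (real (card {1..m}) - 1) + D / lb"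
  proof -
    have "D * (18/5 * (real m - 1) + 1 / lb) \<le> D * (\<rho> * real m)"
      using cons D by (intro mult_left_mono) auto
    thus ?thesis by (simp add: a_def algebra_simps)
  qed
  have Am: "A \<in> sets (PiM {1..m} (\<lambda>_. \<mu>))" unfolding A_def by measurable
  have "emeasure (PiM {1..m} (\<lambda>_. \<mu>)) A = (\<integral>\<^sup>+z. indicator A z \<partial>(PiM {1..m} (\<lambda>_. \<mu>)))"
    using Am by simp
  also have "\<dots> \<le> (\<integral>\<^sup>+z. ennreal (exp (- T / a)) * ennreal (exp ((norm (\<Sum>j\<in>{1..m}. h (z j)))\<^sup>2 / a)) \<partial>(PiM {1..m} (\<lambda>_. \<mu>)))"
  proof (intro nn_integral_mono)
    fix z
    show "indicator A z \<le> ennreal (exp (- T / a)) * ennreal (exp ((norm (\<Sum>j\<in>{1..m}. h (z j)))\<^sup>2 / a))"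
    proof (cases "z \<in> A")
      case True
      hence "T / a \<le> (norm (\<Sum>j\<in>{1..m}. h (z j)))\<^sup>2 / a" using apos by (simp add: A_def divide_right_mono)
      hence "1 \<le> exp (- T / a) * exp ((norm (\<Sum>j\<in>{1..m}. h (z j)))\<^sup>2 / a)"
        by (simp add: exp_add[symmetric])
      thus ?thesis using True by (simp add: ennreal_mult[symmetric] ennreal_1[symmetric] del: ennreal_1)
    qed simp
  qed
  also have "\<dots> = ennreal (exp (- T / a)) * (\<integral>\<^sup>+z. ennreal (exp ((norm (\<Sum>j\<in>{1..m}. h (z j)))\<^sup>2 / a)) \<partial>(PiM {1..m} (\<lambda>_. \<mu>)))"
    by (rule nn_integral_cmult) measurable
  also have "\<dots> \<le> ennreal (exp (- T / a)) * ennreal (exp (D * real (card {1..m}) / ((13/18 - lb) * (a - 18/5 * D * (real (card {1..m}) - 1)))))"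
    by (intro mult_left_mono pim_mgf[OF P h hi h0 E D lb _ acons]) auto
  also have "\<dots> = ennreal (exp (- T / a + D * real m / ((13/18 - lb) * (a - 18/5 * D * (real m - 1)))))"
    unfolding exp_add card_atLeastAtMost by (simp add: ennreal_mult)
  also have "D * real m / ((13/18 - lb) * (a - 18/5 * D * (real m - 1)))
      = 1 / ((13/18 - lb) * (\<rho> - 18/5 * (real m - 1) / real m))"
  proof -
    have "a - 18/5 * D * (real m - 1) = D * real m * (\<rho> - 18/5 * (real m - 1) / real m)"
      using mpos by (simp add: a_def field_simps)
    thus ?thesis using D mpos by simp
  qed
  finally have "emeasure (PiM {1..m} (\<lambda>_. \<mu>)) A
      \<le> ennreal (exp (1 / ((13/18 - lb) * (\<rho> - 18/5 * (real m - 1) / real m)) - T / (D * real m * \<rho>)))"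
    by (simp add: a_def)
  thus ?thesis unfolding A_def[symmetric] measure_def by (intro enn2real_leI) auto
qed

lemma convex_quad:
  fixes c b d lo hi x :: real
  assumes "c \<ge> 0" "lo \<le> x" "x \<le> hi" "c*lo\<^sup>2 + b*lo + d \<le> 0" "c*hi\<^sup>2 + b*hi + d \<le> 0"
  shows "c*x\<^sup>2 + b*x + d \<le> 0"
proof -
  have h1: "c*((x-lo)*(hi-x)) \<ge> 0" using assms by (intro mult_nonneg_nonneg) auto
  define s where "s = c*(lo+hi) + b"
  have eq1: "c*x\<^sup>2 + b*x + d = (s*x + d - c*lo*hi) - c*((x-lo)*(hi-x))"
    by (simp add: s_def power2_eq_square algebra_simps)
  have glo: "s*lo + d - c*lo*hi = c*lo\<^sup>2 + b*lo + d" by (simp add: s_def power2_eq_square algebra_simps)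
  have ghi: "s*hi + d - c*lo*hi = c*hi\<^sup>2 + b*hi + d" by (simp add: s_def power2_eq_square algebra_simps)
  show ?thesis
  proof (cases "s \<ge> 0")
    case True
    have "s*(hi-x) \<ge> 0" using True assms by (intro mult_nonneg_nonneg) auto
    moreover have "s*x = s*hi - s*(hi-x)" by (simp add: algebra_simps)
    ultimately show ?thesis using eq1 ghi h1 assms by linarith
  next
    case False
    have "s*(x-lo) \<le> 0" using False assms by (intro mult_nonpos_nonneg) auto
    moreover have "s*x = s*lo + s*(x-lo)" by (simp add: algebra_simps)
    ultimately show ?thesis using eq1 glo h1 assms by linarith
  qed
qed

lemma quad_reg:
  fixes K \<rho> lo hi x :: real
  assumes "\<rho> \<ge> 4" "lo \<le> x" "x \<le> hi"
    "K - 2*(1+lo)\<^sup>2/\<rho> + lo\<^sup>2/2 \<le> 0" "K - 2*(1+hi)\<^sup>2/\<rho> + hi\<^sup>2/2 \<le> 0"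
  shows "K - 2*(1+x)\<^sup>2/\<rho> \<le> - x\<^sup>2/2"
proof -
  have rp: "\<rho> > 0" using assms by simp
  have eq: "K - 2*(1+y)\<^sup>2/\<rho> + y\<^sup>2/2 = (1/2 - 2/\<rho>)*y\<^sup>2 + (-4/\<rho>)*y + (K - 2/\<rho>)" for y
    using rp by (simp add: power2_eq_square field_simps)
  have c: "1/2 - 2/\<rho> \<ge> 0" using assms by (simp add: field_simps)
  have "(1/2 - 2/\<rho>)*x\<^sup>2 + (-4/\<rho>)*x + (K - 2/\<rho>) \<le> 0"
    by (rule convex_quad[OF c assms(2,3)]) (use assms(4,5) eq in auto)
  thus ?thesis using eq[of x] by linarith
qed

lemma lin4:
  fixes K x :: real
  assumes "K - 1/2 \<le> x"
  shows "K - 2*(1+x)\<^sup>2/4 \<le> - x\<^sup>2/2"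
proof -
  have "2*(1+x)\<^sup>2/4 = 1/2 + x + x\<^sup>2/2" by (simp add: power2_eq_square field_simps)
  thus ?thesis using assms by linarith
qed

definition okp :: "nat \<Rightarrow> real \<Rightarrow> real \<Rightarrow> real \<Rightarrow> bool" where
  "okp m \<Omega> lb \<rho> \<longleftrightarrow> 0 < lb \<and> lb < 13/18 \<and> \<rho> > 0 \<and> \<rho> * real m \<ge> 18/5*(real m - 1) + 1/lb \<and>
     1/((13/18-lb)*(\<rho> - 18/5*(real m - 1)/real m)) - 2*(1+\<Omega>)\<^sup>2/\<rho> \<le> -\<Omega>\<^sup>2/2"

lemma gen4:
  assumes m: "real m \<ge> 4" and lb: "0 < lb" "lb < 13/18" and rho: "\<rho> > 18/5"
    and c4: "4*(\<rho> - 18/5) \<ge> 1/lb - 18/5"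
    and ex: "1/((13/18-lb)*(\<rho> - 18/5)) - 2*(1+\<Omega>)\<^sup>2/\<rho> \<le> -\<Omega>\<^sup>2/2"
  shows "okp m \<Omega> lb \<rho>"
proof -
  have mp: "real m > 0" using m by simp
  have "(\<rho> - 18/5) * 4 \<le> (\<rho> - 18/5) * real m" using rho m by (intro mult_left_mono) auto
  moreover have "(\<rho> - 18/5) * real m = \<rho> * real m - 18/5 * real m" by (simp add: left_diff_distrib)
  moreover have "18/5*(real m - 1) = 18/5 * real m - 18/5" by (simp add: right_diff_distrib)
  ultimately have cons: "\<rho> * real m \<ge> 18/5*(real m - 1) + 1/lb" using c4 by linarith
  have r1: "18/5*(real m - 1)/real m \<le> 18/5" using mp by (simp add: field_simps)
  have c0: "13/18 - lb > 0" using lb by simp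
  have "1/((13/18-lb)*(\<rho> - 18/5*(real m - 1)/real m)) \<le> 1/((13/18-lb)*(\<rho> - 18/5))"
  proof (rule divide_left_mono)
    show "(13/18-lb)*(\<rho> - 18/5) \<le> (13/18-lb)*(\<rho> - 18/5*(real m - 1)/real m)"
      using r1 c0 by (intro mult_left_mono) auto
    show "0 < (13/18-lb)*(\<rho> - 18/5*(real m - 1)/real m) * ((13/18-lb)*(\<rho> - 18/5))"
    proof -
      have pos1: "\<rho> - 18/5*(real m - 1)/real m > 0" using r1 rho by linarith
      have pos2: "\<rho> - 18/5 > 0" using rho by linarith
      show ?thesis by (intro mult_pos_pos c0 pos1 pos2)
    qed
  qed simp
  thus ?thesis unfolding okp_def using lb rho cons ex by auto
qed

lemma num_ok:
  fixes m :: nat and \<Omega> :: real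
  assumes m: "m \<ge> 1" and O: "\<Omega> \<ge> 41/100"
  shows "\<exists>lb \<rho>. okp m \<Omega> lb \<rho>"
proof -
  consider "m = 1" | "m = 2" | "m = 3" | "m \<ge> 4" using m by linarith
  thus ?thesis
  proof cases
    case 1
    have "okp m \<Omega> (1/4) 4" unfolding okp_def 1
      by (simp, rule lin4[simplified]) (use O in simp)
    thus ?thesis by blast
  next
    case 2
    show ?thesis
    proof (cases "\<Omega> \<le> 1")
      case True
      have "okp m \<Omega> (9/40) (17/4)" unfolding okp_def 2
        by (simp, rule quad_reg[of "17/4" "41/100" \<Omega> 1, simplified]) (use O True in \<open>simp_all add: power2_eq_square\<close>)
      thus ?thesis by blast
    next
      case False
      have "okp m \<Omega> (1/4) 4" unfolding okp_def 2
        by (simp, rule lin4[simplified]) (use False in simp)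
      thus ?thesis by blast
    qed
  next
    case 3
    show ?thesis
    proof (cases "\<Omega> \<le> 2")
      case True
      have "okp m \<Omega> (3/20) 5" unfolding okp_def 3
        by (simp, rule quad_reg[of 5 "41/100" \<Omega> 2, simplified]) (use O True in \<open>simp_all add: power2_eq_square\<close>)
      thus ?thesis by blast
    next
      case False
      have "okp m \<Omega> (9/40) 4" unfolding okp_def 3
        by (simp, rule lin4[simplified]) (use False in simp)
      thus ?thesis by blast
    qed
  next
    case 4
    hence m4: "real m \<ge> 4" by simp
    consider "\<Omega> \<le> 2" | "2 \<le> \<Omega> \<and> \<Omega> \<le> 8" | "8 \<le> \<Omega> \<and> \<Omega> \<le> 26" | "26 \<le> \<Omega>" by linarith
    thus ?thesis
    proof cases
      case 1
      have "okp m \<Omega> (3/40) 7"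
        by (rule gen4[OF m4]) (simp_all, rule quad_reg[of 7 "41/100" \<Omega> 2, simplified], use O 1 in \<open>simp_all add: power2_eq_square\<close>)
      thus ?thesis by blast
    next
      case 2
      have "okp m \<Omega> (9/40) (19/4)"
        by (rule gen4[OF m4]) (simp_all, rule quad_reg[of "19/4" 2 \<Omega> 8, simplified], use 2 in \<open>simp_all add: power2_eq_square\<close>)
      thus ?thesis by blast
    next
      case 3
      have "okp m \<Omega> (2/5) (17/4)"
        by (rule gen4[OF m4]) (simp_all, rule quad_reg[of "17/4" 8 \<Omega> 26, simplified], use 3 in \<open>simp_all add: power2_eq_square\<close>)
      thus ?thesis by blast
    next
      case 4
      have "okp m \<Omega> (5/8) 4"
        by (rule gen4[OF m4]) (simp_all, rule lin4[simplified], use 4 in simp)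
      thus ?thesis by blast
    qed
  qed
qed

lemma core_bound:
  fixes h :: "'x \<Rightarrow> real^'n" and \<mu> :: "'x measure"
  assumes P: "prob_space \<mu>" and h: "h \<in> borel_measurable \<mu>" and hi: "integrable \<mu> h"
    and h0: "(\<integral>\<xi>. h \<xi> \<partial>\<mu>) = 0"
    and E: "(\<integral>\<^sup>+\<xi>. ennreal (exp ((norm (h \<xi>))\<^sup>2 / D)) \<partial>\<mu>) \<le> ennreal (exp 1)"
    and D: "D > 0" and m: "m \<ge> 1" and O: "\<Omega> \<ge> 41/100"
  shows "measure (PiM {1..m} (\<lambda>_. \<mu>)) {z \<in> space (PiM {1..m} (\<lambda>_. \<mu>)).
      (norm (\<Sum>j\<in>{1..m}. h (z j)))\<^sup>2 > 2*(1+\<Omega>)\<^sup>2*D*real m} \<le> exp (- \<Omega>\<^sup>2 / 2)"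
proof -
  obtain lb \<rho> where ok: "okp m \<Omega> lb \<rho>" using num_ok[OF m O] by blast
  hence lb: "0 < lb" "lb < 13/18" and rho: "\<rho> > 0" and cons: "\<rho> * real m \<ge> 18/5*(real m - 1) + 1/lb"
    and ex: "1/((13/18-lb)*(\<rho> - 18/5*(real m - 1)/real m)) - 2*(1+\<Omega>)\<^sup>2/\<rho> \<le> -\<Omega>\<^sup>2/2"
    unfolding okp_def by auto
  have "measure (PiM {1..m} (\<lambda>_. \<mu>)) {z \<in> space (PiM {1..m} (\<lambda>_. \<mu>)).
      (norm (\<Sum>j\<in>{1..m}. h (z j)))\<^sup>2 > 2*(1+\<Omega>)\<^sup>2*D*real m}
     \<le> exp (1 / ((13/18 - lb) * (\<rho> - 18/5 * (real m - 1) / real m)) - 2*(1+\<Omega>)\<^sup>2*D*real m / (D * real m * \<rho>))"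
    by (rule pim_tail[OF P h hi h0 E D lb m rho cons])
  also have "2*(1+\<Omega>)\<^sup>2*D*real m / (D * real m * \<rho>) = 2*(1+\<Omega>)\<^sup>2/\<rho>"
    using D m by simp
  also have "exp (1 / ((13/18 - lb) * (\<rho> - 18/5 * (real m - 1) / real m)) - 2*(1+\<Omega>)\<^sup>2/\<rho>) \<le> exp (- \<Omega>\<^sup>2 / 2)"
    using ex by simp
  finally show ?thesis .
qed

lemma pointwise:
  fixes fdx fdy L Lt \<delta> D \<Omega> :: real and S g d :: "real^'n" and m :: nat
  assumes m: "m \<ge> 1" and L: "L > 0" and Lt: "Lt \<ge> 3/2*L" and D: "D > 0"
    and A1: "fdx - fdy - inner g d \<le> L/2 * (norm d)\<^sup>2 + \<delta>"
    and A2: "fdx - fdy - inner ((1/real m) *\<^sub>R S) d > (1+2*\<Omega>+\<Omega>\<^sup>2) * (3*D/(Lt*real m)) + Lt/2*(norm d)\<^sup>2 + \<delta>"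
  shows "(norm (S - real m *\<^sub>R g))\<^sup>2 > 2*(1+\<Omega>)\<^sup>2*D*real m"
proof -
  define \<Delta> where "\<Delta> = (1/real m) *\<^sub>R S - g"
  have mp: "real m > 0" using m by simp
  have Ltp: "Lt > 0" using L Lt by simp
  define c where "c = Lt - L"
  have cp: "c > 0" using L Lt by (simp add: c_def)
  have c3: "Lt \<le> 3 * c" using Lt by (simp add: c_def)
  have inn: "inner ((1/real m) *\<^sub>R S) d = inner g d + inner \<Delta> d"
    by (simp add: \<Delta>_def inner_diff_left)
  have cs: "- inner \<Delta> d \<le> norm \<Delta> * norm d"
    using Cauchy_Schwarz_ineq2[of \<Delta> d] by linarith
  have amgm: "norm \<Delta> * norm d - c/2 * (norm d)\<^sup>2 \<le> (norm \<Delta>)\<^sup>2 / (2*c)"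
  proof -
    have "0 \<le> (norm \<Delta> - c * norm d)\<^sup>2 / (2*c)" using cp by simp
    also have "\<dots> = (norm \<Delta>)\<^sup>2 / (2*c) - norm \<Delta> * norm d + c/2 * (norm d)\<^sup>2"
      using cp by (simp add: power2_eq_square field_simps)
    finally show ?thesis by linarith
  qed
  have eqO: "(1+2*\<Omega>+\<Omega>\<^sup>2) = (1+\<Omega>)\<^sup>2" by (simp add: power2_eq_square algebra_simps)
  have A2': "fdx - fdy - (inner g d + inner \<Delta> d) > (1+\<Omega>)\<^sup>2 * (3*D/(Lt*real m)) + Lt/2*(norm d)\<^sup>2 + \<delta>"
    using A2 unfolding eqO inn .
  have ceq: "c/2 * (norm d)\<^sup>2 = Lt/2 * (norm d)\<^sup>2 - L/2 * (norm d)\<^sup>2" unfolding c_def by (simp add: left_diff_distrib diff_divide_distrib)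
  have k1: "(1+\<Omega>)\<^sup>2 * (3*D/(Lt*real m)) < (norm \<Delta>)\<^sup>2 / (2*c)"
    using A1 A2' cs amgm ceq by linarith
  have k2: "(norm \<Delta>)\<^sup>2 / (2*c) \<le> 3 * (norm \<Delta>)\<^sup>2 / (2*Lt)"
  proof -
    have "Lt * (norm \<Delta>)\<^sup>2 \<le> (3*c) * (norm \<Delta>)\<^sup>2" using c3 by (intro mult_right_mono) auto
    thus ?thesis using cp Ltp by (simp add: field_simps)
  qed
  have k3: "(1+\<Omega>)\<^sup>2 * (3*D/(Lt*real m)) < 3 * (norm \<Delta>)\<^sup>2 / (2*Lt)" using k1 k2 by linarith
  hence "(1+\<Omega>)\<^sup>2 * (3*D/(Lt*real m)) * (2 * Lt * real m / 3) < 3 * (norm \<Delta>)\<^sup>2 / (2*Lt) * (2 * Lt * real m / 3)"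
    using Ltp mp by (intro mult_strict_right_mono) auto
  hence k4: "2*(1+\<Omega>)\<^sup>2*D < (norm \<Delta>)\<^sup>2 * real m" using Ltp mp by (simp add: field_simps)
  have "S - real m *\<^sub>R g = real m *\<^sub>R \<Delta>" using mp by (simp add: \<Delta>_def algebra_simps)
  hence "(norm (S - real m *\<^sub>R g))\<^sup>2 = (real m)\<^sup>2 * (norm \<Delta>)\<^sup>2" by (simp add: power_mult_distrib)
  moreover have "2*(1+\<Omega>)\<^sup>2*D * real m < (norm \<Delta>)\<^sup>2 * real m * real m"
    using k4 mp by (intro mult_strict_right_mono) auto
  ultimately show ?thesis by (simp add: power2_eq_square algebra_simps)
qed

theorem corollary2:
  fixes M :: "'w measure" and N :: "'x measure" and \<mu> :: "'x measure"
    and Q :: "(real^'n) set" and f fd :: "real^'n \<Rightarrow> real"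
    and G :: "real^'n \<Rightarrow> 'x \<Rightarrow> real^'n"
    and \<delta> L D \<Omega> :: real and m :: nat
    and \<xi> :: "nat \<Rightarrow> 'w \<Rightarrow> 'x" and x y :: "'w \<Rightarrow> real^'n" and Lt :: "'w \<Rightarrow> real"
  assumes "prob_space M"
    and "closed Q" and "convex Q"
    and "L > 0" and "D > 0"
    and "prob_space \<mu>" and "sets \<mu> = sets N"
    and orc: "stoch_oracle TYPE('n) Q f \<delta> L D \<mu> fd G"
    and G_meas: "(\<lambda>(u, v). G u v) \<in> borel_measurable (borel \<Otimes>\<^sub>M N)"
    and "m \<ge> 1"
    and xi_meas: "\<And>j. j \<in> {1..m} \<Longrightarrow> \<xi> j \<in> M \<rightarrow>\<^sub>M N"
    and xi_law: "\<And>j. j \<in> {1..m} \<Longrightarrow> distr M N (\<xi> j) = \<mu>"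
    and xi_indep: "prob_space.indep_vars M (\<lambda>_. N) \<xi> {1..m}"
    and x_meas: "x \<in> borel_measurable M" and y_meas: "y \<in> borel_measurable M"
    and Lt_meas: "Lt \<in> borel_measurable M"
    and y_indep: "prob_space.indep_set M {y -` A \<inter> space M | A. A \<in> sets borel}
                    {(\<lambda>\<omega>. restrict (\<lambda>j. \<xi> j \<omega>) {1..m}) -` B \<inter> space M
                       | B. B \<in> sets (Pi\<^sub>M {1..m} (\<lambda>_. N))}"
    and xQ: "\<And>\<omega>. \<omega> \<in> space M \<Longrightarrow> x \<omega> \<in> Q"
    and yQ: "\<And>\<omega>. \<omega> \<in> space M \<Longrightarrow> y \<omega> \<in> Q"
    and Lt_ge: "\<And>\<omega>. \<omega> \<in> space M \<Longrightarrow> Lt \<omega> \<ge> 3 / 2 * L"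
    and "\<Omega> \<ge> sqrt 2 - 1"
  shows "measure M {\<omega> \<in> space M.
            fd (x \<omega>) - fd (y \<omega>)
              - inner ((1 / real m) *\<^sub>R (\<Sum>j=1..m. G (y \<omega>) (\<xi> j \<omega>))) (x \<omega> - y \<omega>)
            > (1 + 2 * \<Omega> + \<Omega>\<^sup>2) * (3 * D / (Lt \<omega> * real m))
              + Lt \<omega> / 2 * (norm (x \<omega> - y \<omega>))\<^sup>2 + \<delta>}
         \<le> exp (- \<Omega>\<^sup>2 / 2)"
proof -
  interpret M: prob_space M by fact
  interpret Pm: prob_space \<mu> by fact
  have sets_mu: "sets \<mu> = sets N" by fact
  have m1: "m \<ge> 1" by fact
  have Dp: "D > 0" by fact
  have Lp: "L > 0" by fact
  from orc obtain gd where gd: "\<forall>y\<in>Q.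
        (\<forall>x\<in>Q. 0 \<le> f x - fd y - inner (gd y) (x - y)
               \<and> f x - fd y - inner (gd y) (x - y) \<le> L / 2 * (norm (x - y))\<^sup>2 + \<delta>)
      \<and> integrable \<mu> (G y)
      \<and> (\<integral>\<xi>. G y \<xi> \<partial>\<mu>) = gd y
      \<and> (\<integral>\<^sup>+\<xi>. ennreal (exp ((norm (G y \<xi> - gd y))\<^sup>2 / D)) \<partial>\<mu>) \<le> ennreal (exp 1)"
    unfolding stoch_oracle_def by blast
  have Gmu: "(\<lambda>(u, v). G u v) \<in> borel_measurable (borel \<Otimes>\<^sub>M \<mu>)"
    using G_meas by (subst measurable_cong_sets[OF sets_pair_measure_cong[OF refl sets_mu] refl])
  define gm where "gm v = (\<integral>\<xi>. G v \<xi> \<partial>\<mu>)" for v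
  have gm_meas: "gm \<in> borel_measurable borel"
    unfolding gm_def by (rule Pm.borel_measurable_lebesgue_integral) (use Gmu in simp)
  have gm_gd: "gm v = gd v" if "v \<in> Q" for v using gd that by (simp add: gm_def)
  define T where "T = 2*(1+\<Omega>)\<^sup>2*D*real m"
  define Z where "Z \<omega> = (\<lambda>j\<in>{1..m}. \<xi> j \<omega>)" for \<omega>
  define PN where "PN = PiM {1..m} (\<lambda>_. N)"
  define Pmu where "Pmu = PiM {1..m} (\<lambda>_. \<mu>)"
  interpret PP: prob_space Pmu unfolding Pmu_def by (rule prob_space_PiM) (use Pm.prob_space_axioms in auto)
  have sets_PN: "sets Pmu = sets PN" unfolding Pmu_def PN_def by (intro sets_PiM_cong) (auto simp: sets_mu)
  have space_PN: "space Pmu = space PN" using sets_PN by (rule sets_eq_imp_space_eq)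
  have Gcomp: "(\<lambda>p. G (fst p) (snd p j)) \<in> borel_measurable (borel \<Otimes>\<^sub>M PN)" if "j \<in> {1..m}" for j
  proof -
    have "(\<lambda>p. (fst p, snd p j)) \<in> (borel \<Otimes>\<^sub>M PN) \<rightarrow>\<^sub>M (borel \<Otimes>\<^sub>M N)"
      unfolding PN_def using that
      by (intro measurable_Pair measurable_fst measurable_compose[OF measurable_snd measurable_component_singleton]) auto
    from measurable_compose[OF this G_meas] show ?thesis by simp
  qed
  have Sm: "(\<lambda>p. (\<Sum>j\<in>{1..m}. (G (fst p) (snd p j) - gm (fst p)))) \<in> borel_measurable (borel \<Otimes>\<^sub>M PN)"
    by (intro borel_measurable_sum borel_measurable_diff Gcomp measurable_compose[OF measurable_fst gm_meas]) auto
  define C where "C = {p \<in> space (borel \<Otimes>\<^sub>M PN). (norm (\<Sum>j\<in>{1..m}. (G (fst p) (snd p j) - gm (fst p))))\<^sup>2 > T}"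
  have Cm: "C \<in> sets (borel \<Otimes>\<^sub>M PN)" unfolding C_def using Sm by measurable
  define B where "B = {\<omega> \<in> space M. (norm (\<Sum>j\<in>{1..m}. (G (y \<omega>) (\<xi> j \<omega>) - gm (y \<omega>))))\<^sup>2 > T}"
  have Zm: "Z \<in> M \<rightarrow>\<^sub>M PN" unfolding Z_def PN_def by (intro measurable_restrict) (use xi_meas in auto)
  have ym: "y \<in> M \<rightarrow>\<^sub>M borel" using y_meas by simp
  have YZm: "(\<lambda>\<omega>. (y \<omega>, Z \<omega>)) \<in> M \<rightarrow>\<^sub>M (borel \<Otimes>\<^sub>M PN)" using ym Zm by (rule measurable_Pair)
  have BC: "B = (\<lambda>\<omega>. (y \<omega>, Z \<omega>)) -` C \<inter> space M"
  proof -
    have "(y \<omega>, Z \<omega>) \<in> space (borel \<Otimes>\<^sub>M PN)" if "\<omega> \<in> space M" for \<omega>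
      using measurable_space[OF YZm that] .
    moreover have "(\<Sum>j\<in>{1..m}. (G (y \<omega>) (Z \<omega> j) - gm (y \<omega>))) = (\<Sum>j\<in>{1..m}. (G (y \<omega>) (\<xi> j \<omega>) - gm (y \<omega>)))" for \<omega>
      by (intro sum.cong) (auto simp: Z_def)
    ultimately show ?thesis unfolding B_def C_def by auto
  qed
  have joint: "distr M borel y \<Otimes>\<^sub>M distr M PN Z = distr M (borel \<Otimes>\<^sub>M PN) (\<lambda>\<omega>. (y \<omega>, Z \<omega>))"
  proof (rule pair_measure_eqI)
    show "sigma_finite_measure (distr M borel y)"
      by (rule prob_space_imp_sigma_finite[OF M.prob_space_distr[OF ym]])
    show "sigma_finite_measure (distr M PN Z)"
      by (rule prob_space_imp_sigma_finite[OF M.prob_space_distr[OF Zm]])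
    show "sets (distr M borel y \<Otimes>\<^sub>M distr M PN Z) = sets (distr M (borel \<Otimes>\<^sub>M PN) (\<lambda>\<omega>. (y \<omega>, Z \<omega>)))"
      by (simp add: sets_pair_measure_cong[OF sets_distr sets_distr])
  next
    fix A Bs assume A: "A \<in> sets (distr M borel y)" and Bs: "Bs \<in> sets (distr M PN Z)"
    hence A': "A \<in> sets borel" and B': "Bs \<in> sets PN" by auto
    have e1: "y -` A \<inter> space M \<in> {y -` A \<inter> space M | A. A \<in> sets borel}" using A' by blast
    have e2: "Z -` Bs \<inter> space M \<in> {(\<lambda>\<omega>. restrict (\<lambda>j. \<xi> j \<omega>) {1..m}) -` B \<inter> space M
                       | B. B \<in> sets (Pi\<^sub>M {1..m} (\<lambda>_. N))}" using B' unfolding Z_def PN_def by blast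
    have pr: "M.prob ((y -` A \<inter> space M) \<inter> (Z -` Bs \<inter> space M)) = M.prob (y -` A \<inter> space M) * M.prob (Z -` Bs \<inter> space M)"
      by (rule M.indep_setD[OF y_indep e1 e2])
    have "(\<lambda>\<omega>. (y \<omega>, Z \<omega>)) -` (A \<times> Bs) \<inter> space M = (y -` A \<inter> space M) \<inter> (Z -` Bs \<inter> space M)" by auto
    hence "emeasure (distr M (borel \<Otimes>\<^sub>M PN) (\<lambda>\<omega>. (y \<omega>, Z \<omega>))) (A \<times> Bs) = ennreal (M.prob ((y -` A \<inter> space M) \<inter> (Z -` Bs \<inter> space M)))"
      using A' B' by (simp add: emeasure_distr[OF YZm] M.emeasure_eq_measure)
    also have "\<dots> = ennreal (M.prob (y -` A \<inter> space M)) * ennreal (M.prob (Z -` Bs \<inter> space M))"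
      by (simp add: pr ennreal_mult)
    also have "\<dots> = emeasure (distr M borel y) A * emeasure (distr M PN Z) Bs"
      using A' B' by (simp add: emeasure_distr[OF ym] emeasure_distr[OF Zm] M.emeasure_eq_measure)
    finally show "emeasure (distr M borel y) A * emeasure (distr M PN Z) Bs = emeasure (distr M (borel \<Otimes>\<^sub>M PN) (\<lambda>\<omega>. (y \<omega>, Z \<omega>))) (A \<times> Bs)" ..
  qed
  have DZ: "distr M PN Z = Pmu"
  proof -
    have "distr M (PiM {1..m} (\<lambda>_. N)) (\<lambda>x. \<lambda>i\<in>{1..m}. \<xi> i x) = (\<Pi>\<^sub>M i\<in>{1..m}. distr M N (\<xi> i))"
      using M.indep_vars_iff_distr_eq_PiM'[where I="{1..m}" and M'="\<lambda>_. N" and X=\<xi>] xi_indep xi_meas m1 by auto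
    also have "\<dots> = PiM {1..m} (\<lambda>_. \<mu>)" by (intro PiM_cong) (auto simp: xi_law)
    finally show ?thesis unfolding Z_def PN_def Pmu_def .
  qed
  define Dy where "Dy = distr M borel y"
  interpret PY: prob_space Dy unfolding Dy_def by (rule M.prob_space_distr[OF ym])
  have Qb: "Q \<in> sets borel" using \<open>closed Q\<close> by (rule borel_closed)
  have AEQ: "AE v in Dy. v \<in> Q"
    unfolding Dy_def by (subst AE_distr_iff[OF ym]) (use Qb yQ in auto)
  have slice: "emeasure Pmu (Pair v -` C) \<le> ennreal (exp (- \<Omega>\<^sup>2 / 2))" if vQ: "v \<in> Q" for v
  proof -
    define h where "h \<xi> = G v \<xi> - gm v" for \<xi>
    have Gv: "(\<lambda>\<xi>. G v \<xi>) \<in> borel_measurable \<mu>"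
    proof -
      have "(\<lambda>\<xi>. (v, \<xi>)) \<in> \<mu> \<rightarrow>\<^sub>M (borel \<Otimes>\<^sub>M \<mu>)" by (intro measurable_Pair measurable_const measurable_ident_sets) auto
      from measurable_compose[OF this Gmu] show ?thesis by simp
    qed
    have hm: "h \<in> borel_measurable \<mu>" unfolding h_def using Gv by measurable
    have Gi: "integrable \<mu> (G v)" using gd vQ by auto
    have hi: "integrable \<mu> h" unfolding h_def using Gi by (intro Bochner_Integration.integrable_diff) auto
    have h0: "(\<integral>\<xi>. h \<xi> \<partial>\<mu>) = 0"
      unfolding h_def using Gi by (subst Bochner_Integration.integral_diff) (auto simp: gm_def Pm.prob_space)
    have hE: "(\<integral>\<^sup>+\<xi>. ennreal (exp ((norm (h \<xi>))\<^sup>2 / D)) \<partial>\<mu>) \<le> ennreal (exp 1)"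
      unfolding h_def using gd vQ gm_gd[OF vQ] by auto
    have O41: "\<Omega> \<ge> 41/100"
    proof -
      have "7071/5000 \<le> sqrt (2::real)" by (rule real_le_rsqrt) (simp add: power2_eq_square)
      thus ?thesis using \<open>\<Omega> \<ge> sqrt 2 - 1\<close> by linarith
    qed
    have cb: "measure Pmu {z \<in> space Pmu. (norm (\<Sum>j\<in>{1..m}. h (z j)))\<^sup>2 > 2*(1+\<Omega>)\<^sup>2*D*real m} \<le> exp (- \<Omega>\<^sup>2 / 2)"
      unfolding Pmu_def by (rule core_bound[OF Pm.prob_space_axioms hm hi h0 hE Dp m1 O41])
    have "Pair v -` C = {z \<in> space Pmu. (norm (\<Sum>j\<in>{1..m}. h (z j)))\<^sup>2 > 2*(1+\<Omega>)\<^sup>2*D*real m}"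
      unfolding C_def h_def T_def space_PN by (auto simp: space_pair_measure)
    hence "emeasure Pmu (Pair v -` C) = ennreal (measure Pmu {z \<in> space Pmu. (norm (\<Sum>j\<in>{1..m}. h (z j)))\<^sup>2 > 2*(1+\<Omega>)\<^sup>2*D*real m})"
      by (simp add: PP.emeasure_eq_measure)
    also have "\<dots> \<le> ennreal (exp (- \<Omega>\<^sup>2 / 2))" using cb by (rule ennreal_leI)
    finally show ?thesis .
  qed
  have CmP: "C \<in> sets (Dy \<Otimes>\<^sub>M Pmu)"
    using Cm by (simp add: Dy_def sets_pair_measure_cong[OF _ sets_PN])
  have "emeasure (Dy \<Otimes>\<^sub>M Pmu) C = (\<integral>\<^sup>+v. emeasure Pmu (Pair v -` C) \<partial>Dy)"
    by (rule PP.emeasure_pair_measure_alt[OF CmP])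
  also have "\<dots> \<le> (\<integral>\<^sup>+v. ennreal (exp (- \<Omega>\<^sup>2 / 2)) \<partial>Dy)"
    by (rule nn_integral_mono_AE) (use AEQ slice in auto)
  also have "\<dots> = ennreal (exp (- \<Omega>\<^sup>2 / 2))" by (simp add: PY.emeasure_space_1)
  finally have eC: "emeasure (Dy \<Otimes>\<^sub>M Pmu) C \<le> ennreal (exp (- \<Omega>\<^sup>2 / 2))" .
  have "measure M B = measure (distr M (borel \<Otimes>\<^sub>M PN) (\<lambda>\<omega>. (y \<omega>, Z \<omega>))) C"
    by (simp add: BC measure_distr[OF YZm Cm])
  also have "\<dots> = measure (Dy \<Otimes>\<^sub>M Pmu) C" by (simp add: joint[symmetric] DZ Dy_def)
  also have "\<dots> \<le> exp (- \<Omega>\<^sup>2 / 2)" unfolding measure_def by (rule enn2real_leI) (use eC in auto)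
  finally have mB: "measure M B \<le> exp (- \<Omega>\<^sup>2 / 2)" .
  define Ev where "Ev = {\<omega> \<in> space M.
            fd (x \<omega>) - fd (y \<omega>)
              - inner ((1 / real m) *\<^sub>R (\<Sum>j=1..m. G (y \<omega>) (\<xi> j \<omega>))) (x \<omega> - y \<omega>)
            > (1 + 2 * \<Omega> + \<Omega>\<^sup>2) * (3 * D / (Lt \<omega> * real m))
              + Lt \<omega> / 2 * (norm (x \<omega> - y \<omega>))\<^sup>2 + \<delta>}"
  have EvB: "Ev \<subseteq> B"
  proof
    fix \<omega> assume w: "\<omega> \<in> Ev"
    hence sp: "\<omega> \<in> space M" by (simp add: Ev_def)
    have xq: "x \<omega> \<in> Q" and yq: "y \<omega> \<in> Q" using xQ yQ sp by auto
    have f1: "0 \<le> f (x \<omega>) - fd (x \<omega>) - inner (gd (x \<omega>)) (x \<omega> - x \<omega>)" using gd xq by blast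
    have f2: "f (x \<omega>) - fd (y \<omega>) - inner (gd (y \<omega>)) (x \<omega> - y \<omega>) \<le> L / 2 * (norm (x \<omega> - y \<omega>))\<^sup>2 + \<delta>"
      using gd xq yq by blast
    have A1: "fd (x \<omega>) - fd (y \<omega>) - inner (gm (y \<omega>)) (x \<omega> - y \<omega>) \<le> L / 2 * (norm (x \<omega> - y \<omega>))\<^sup>2 + \<delta>"
      using f1 f2 gm_gd[OF yq] by simp
    have "(norm ((\<Sum>j=1..m. G (y \<omega>) (\<xi> j \<omega>)) - real m *\<^sub>R gm (y \<omega>)))\<^sup>2 > 2*(1+\<Omega>)\<^sup>2*D*real m"
      by (rule pointwise[OF m1 Lp Lt_ge[OF sp] Dp A1]) (use w in \<open>simp add: Ev_def\<close>)
    moreover have "(\<Sum>j\<in>{1..m}. (G (y \<omega>) (\<xi> j \<omega>) - gm (y \<omega>))) = (\<Sum>j=1..m. G (y \<omega>) (\<xi> j \<omega>)) - real m *\<^sub>R gm (y \<omega>)"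
      by (simp add: sum_subtractf scaleR_conv_of_real)
    ultimately show "\<omega> \<in> B" using sp by (simp add: B_def T_def)
  qed
  show ?thesis
  proof (cases "Ev \<in> sets M")
    case True
    have "measure M Ev \<le> measure M B" using EvB True BC measurable_sets[OF YZm Cm] by (intro M.finite_measure_mono) auto
    thus ?thesis using mB unfolding Ev_def by linarith
  next
    case False
    hence "measure M Ev = 0" by (simp add: measure_notin_sets)
    thus ?thesis unfolding Ev_def by simp
  qed
qed

end
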